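(* Let $m\ge1$, $q=2^m$, let $n$ be even, let $L$ be a $2$-linear polynomial over $\mathbb F_{q^n}$, and let $A\in\mathbb F_{q^n}^*$. Then $\mathrm{Tr}(x^{q+1})+L(x)$ is a permutation polynomial of $\mathbb F_{q^n}$ if and only if $\ker(\mathrm{Tr}_2\circ L^\prime)\subseteq\ker\mathrm{Tr}$ and $\ker L=\{0\}$. If $A^{\frac{q^n-1}{q+1}}\ne1$, then $\mathrm{Tr}(Ax^{q+1})+L(x)$ is not a permutation polynomial of $\mathbb F_{q^n}$.
   Context: $\mathrm{Tr}$ denotes the trace map of $\mathbb F_{q^n}$ over $\mathbb F_q$ and $\mathrm{Tr}_2$ the trace map of $\mathbb F_{q^n}$ over $\mathbb F_{q^2}$. A $2$-linear polynomial over $\mathbb F_{q^n}$ has the form $L(x)=\sum_{j=0}^{mn-1}a_jx^{2^j}$; its adjoint is $L^\prime(x)=\sum_j(a_jx)^{2^{-j}}$, where $y\mapsto y^{2^{-j}}$ is the inverse of $y\mapsto y^{2^j}$ on $\mathbb F_{q^n}$. Polynomials are regarded as maps on $\mathbb F_{q^n}$; $\ker$ denotes the kernel of an additive map. *)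

theory Defs
  imports Main
begin

definition tr :: "nat \<Rightarrow> nat \<Rightarrow> 'a::field \<Rightarrow> 'a" where
  "tr q n x = (\<Sum>i<n. x ^ (q ^ i))"

definition tr2 :: "nat \<Rightarrow> nat \<Rightarrow> 'a::field \<Rightarrow> 'a" where
  "tr2 q n x = (\<Sum>i<n div 2. x ^ ((q ^ 2) ^ i))"

definition lin2 :: "nat \<Rightarrow> (nat \<Rightarrow> 'a::field) \<Rightarrow> 'a \<Rightarrow> 'a" where
  "lin2 N a x = (\<Sum>j<N. a j * x ^ (2 ^ j))"

definition frob_inv :: "nat \<Rightarrow> 'a::field \<Rightarrow> 'a" where
  "frob_inv j y = inv (\<lambda>z::'a. z ^ (2 ^ j)) y"

definition adj2 :: "nat \<Rightarrow> (nat \<Rightarrow> 'a::field) \<Rightarrow> 'a \<Rightarrow> 'a" where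
  "adj2 N a x = (\<Sum>j<N. frob_inv j (a j * x))"

definition addker :: "('a \<Rightarrow> 'b::zero) \<Rightarrow> 'a set" where
  "addker f = {x. f x = 0}"

end

theory Submission
  imports Defs "HOL-Computational_Algebra.Polynomial"
begin


lemma fermat_aux:
  fixes x :: "'a::{finite,field}"
  assumes "x \<noteq> 0"
  shows "x ^ (card (UNIV::'a set) - 1) = 1"
proof -
  let ?U = "UNIV - {0::'a}"
  have bij: "bij_betw ((*) x) ?U ?U"
    unfolding bij_betw_def
  proof
    show "inj_on ((*) x) ?U" using assms by (auto simp: inj_on_def)
    show "(*) x ` ?U = ?U"
    proof
      show "(*) x ` ?U \<subseteq> ?U" using assms by auto
      show "?U \<subseteq> (*) x ` ?U"
      proof
        fix y assume "y \<in> ?U"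
        then have "y = x * (y / x)" "y / x \<in> ?U" using assms by auto
        then show "y \<in> (*) x ` ?U" by blast
      qed
    qed
  qed
  have "prod (\<lambda>y. x * y) ?U = prod id ?U"
    using prod.reindex_bij_betw[OF bij, of id] by simp
  moreover have "prod (\<lambda>y. x * y) ?U = x ^ card ?U * prod id ?U"
    by (simp add: prod.distrib)
  moreover have "prod id ?U \<noteq> 0" by (simp add: prod_zero_iff)
  ultimately have "x ^ card ?U = 1" by simp
  moreover have "card ?U = card (UNIV::'a set) - 1" by (simp add: card_Diff_singleton)
  ultimately show ?thesis by simp
qed

lemma fermat:
  fixes x :: "'a::{finite,field}"
  shows "x ^ card (UNIV::'a set) = x"
proof (cases "x = 0")
  case True then show ?thesis by (simp add: finite_UNIV_card_ge_0)
next
  case False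
  have "card (UNIV::'a set) = Suc (card (UNIV::'a set) - 1)" using finite_UNIV_card_ge_0[where 'a='a] by simp
  then have "x ^ card (UNIV::'a set) = x * x ^ (card (UNIV::'a set) - 1)" by (metis power_Suc)
  then show ?thesis using fermat_aux[OF False] by simp
qed

definition absT :: "nat \<Rightarrow> 'a::field \<Rightarrow> 'a" where
  "absT N x = (\<Sum>i<N. x ^ (2 ^ i))"

definition perp :: "nat \<Rightarrow> 'a::field set \<Rightarrow> 'a set" where
  "perp N S = {x. \<forall>s\<in>S. absT N (x * s) = 0}"

definition sgrp :: "'a::field set \<Rightarrow> bool" where
  "sgrp S \<longleftrightarrow> 0 \<in> S \<and> (\<forall>x\<in>S. \<forall>y\<in>S. x + y \<in> S)"

locale ff =
  fixes N :: nat
  assumes cardF: "card (UNIV::'a::{finite,field} set) = 2 ^ N"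
begin

lemma N_pos: "N \<ge> 1"
proof (rule ccontr)
  assume "\<not> N \<ge> 1" then have "card (UNIV::'a set) = 1" using cardF by simp
  then obtain z where "UNIV = {z::'a}" using card_1_singletonE by blast
  then have "(0::'a) = 1" by (metis UNIV_I singletonD)
  then show False by simp
qed

lemma char2: "(1::'a) + 1 = 0"
proof -
  have "(-1::'a) ^ card (UNIV::'a set) = -1" by (rule fermat)
  moreover have "even (card (UNIV::'a set))" using cardF N_pos by (simp add: dvd_power)
  ultimately have "(1::'a) = -1" by simp
  then show ?thesis by (metis add.right_inverse)
qed

lemma two: "(2::'a) = 0" using char2 by (simp add: one_add_one)

lemma add_self[simp]: "(x::'a) + x = 0"
proof -
  have "x + x = x * (1 + 1)" by (simp add: algebra_simps)
  then show ?thesis using char2 by simp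
qed

lemma minus_eq[simp]: "- (x::'a) = x"
  using add_self[of x] by (metis add_eq_0_iff)

lemma diff_eq_add: "(x::'a) - y = x + y"
  by (metis diff_conv_add_uminus minus_eq)

lemma sq_add: "((x::'a) + y) ^ 2 = x ^ 2 + y ^ 2"
proof -
  have "(x + y) ^ 2 = x^2 + y^2 + x * y * 2" by (simp add: power2_eq_square algebra_simps)
  then show ?thesis by (simp only: two mult_zero_right add_0_right)
qed

lemma frob_add: "((x::'a) + y) ^ (2 ^ j) = x ^ (2 ^ j) + y ^ (2 ^ j)"
proof (induction j)
  case 0 then show ?case by simp
next
  case (Suc j)
  have "(x + y) ^ (2 ^ Suc j) = ((x + y) ^ (2 ^ j)) ^ 2" by (simp add: power_mult[symmetric] mult.commute)
  also have "\<dots> = (x ^ (2 ^ j)) ^ 2 + (y ^ (2 ^ j)) ^ 2" using Suc sq_add by simp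
  also have "\<dots> = x ^ (2 ^ Suc j) + y ^ (2 ^ Suc j)" by (simp add: power_mult[symmetric] mult.commute)
  finally show ?case .
qed

lemma frob_sum: "(sum (f::_\<Rightarrow>'a) S) ^ (2 ^ j) = sum (\<lambda>i. f i ^ (2 ^ j)) S"
proof (induction S rule: infinite_finite_induct)
  case (infinite A) then show ?case by simp
next
  case empty then show ?case by simp
next
  case (insert x F) then show ?case by (simp add: frob_add)
qed

lemma frob_card: "(x::'a) ^ (2 ^ N) = x"
  using fermat[of x] cardF by simp

lemma frob_mod: "(x::'a) ^ (2 ^ j) = x ^ (2 ^ (j mod N))"
proof (induction j rule: less_induct)
  case (less j)
  show ?case
  proof (cases "j < N")
    case True then show ?thesis by simp
  next
    case False
    then have j: "j = N + (j - N)" by simp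
    have "x ^ (2 ^ j) = (x ^ (2 ^ N)) ^ (2 ^ (j - N))"
      by (subst j, simp add: power_add power_mult)
    also have "\<dots> = x ^ (2 ^ (j - N))" by (simp add: frob_card)
    also have "\<dots> = x ^ (2 ^ ((j - N) mod N))" using less N_pos False by simp
    also have "(j - N) mod N = j mod N" using False by (simp add: le_mod_geq)
    finally show ?thesis .
  qed
qed

lemma frob_inj: "inj (\<lambda>z::'a. z ^ (2 ^ j))"
proof (rule injI)
  fix x y :: 'a assume "x ^ (2 ^ j) = y ^ (2 ^ j)"
  then have "(x - y) ^ (2 ^ j) = 0" by (simp add: diff_eq_add frob_add)
  then show "x = y" by simp
qed

lemma frob_inv_pow: "frob_inv j y ^ (2 ^ j) = (y::'a)"
proof -
  have "surj (\<lambda>z::'a. z ^ (2 ^ j))" using finite_UNIV_inj_surj[OF _ frob_inj] by simp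
  then show ?thesis unfolding frob_inv_def by (meson surj_f_inv_f)
qed


lemma T_add: "absT N ((x::'a) + y) = absT N x + absT N y"
  unfolding absT_def by (simp add: frob_add sum.distrib)

lemma T_zero[simp]: "absT N (0::'a) = 0"
  unfolding absT_def by (simp add: power_0_left)

lemma T_sq: "absT N ((x::'a) ^ 2) = absT N x"
proof -
  let ?f = "\<lambda>i. x ^ (2 ^ i)"
  have "absT N (x ^ 2) = (\<Sum>i<N. ?f (Suc i))"
    unfolding absT_def by (simp add: power_mult[symmetric] mult.commute)
  moreover have "(\<Sum>i<Suc N. ?f i) = ?f 0 + (\<Sum>i<N. ?f (Suc i))" by (rule sum.lessThan_Suc_shift)
  moreover have "(\<Sum>i<Suc N. ?f i) = (\<Sum>i<N. ?f i) + ?f N" by simp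
  moreover have "?f N = ?f 0" using frob_card by simp
  ultimately show ?thesis unfolding absT_def by simp
qed

lemma T_frob: "absT N ((x::'a) ^ (2 ^ j)) = absT N x"
proof (induction j)
  case 0 then show ?case by simp
next
  case (Suc j)
  have "x ^ (2 ^ Suc j) = (x ^ (2 ^ j)) ^ 2" by (simp add: power_mult[symmetric] mult.commute)
  then show ?case using Suc T_sq by simp
qed

lemma T_idem: "absT N (x::'a) ^ 2 = absT N x"
proof -
  have "absT N x ^ (2 ^ 1) = absT N (x ^ (2 ^ 1))"
    unfolding absT_def frob_sum[of _ _ 1] by (simp add: power_mult[symmetric] mult.commute)
  then show ?thesis using T_frob[of x 1] by simp
qed

lemma T_01: "absT N (x::'a) = 0 \<or> absT N x = 1"
proof -
  have "absT N x * (absT N x - 1) = 0" using T_idem[of x] by (simp add: power2_eq_square algebra_simps)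
  then show ?thesis by simp
qed

lemma T_nonzero: "\<exists>x::'a. absT N x \<noteq> 0"
proof (rule ccontr)
  assume H: "\<not> (\<exists>x::'a. absT N x \<noteq> 0)"
  define p :: "'a poly" where "p = (\<Sum>i<N. monom 1 (2 ^ i))"
  have ev: "poly p x = absT N x" for x unfolding p_def absT_def by (simp add: poly_sum poly_monom)
  have "coeff p (2 ^ (N - 1)) = (\<Sum>i<N. if 2 ^ i = (2::nat) ^ (N - 1) then 1 else 0)"
    unfolding p_def by (simp add: coeff_sum)
  also have "\<dots> = (\<Sum>i\<in>{N - 1}. 1)"
  proof -
    have "(\<Sum>i<N. if 2 ^ i = (2::nat) ^ (N - 1) then (1::'a) else 0) = (\<Sum>i<N. if i = N - 1 then 1 else 0)"
      by (rule sum.cong) auto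
    also have "\<dots> = 1" using N_pos by simp
    finally show ?thesis by simp
  qed
  finally have "p \<noteq> 0" by auto
  have "degree p \<le> 2 ^ (N - 1)" unfolding p_def
    by (rule degree_sum_le) (auto intro: order.trans[OF degree_monom_le])
  moreover have "card {x. poly p x = 0} \<le> degree p" by (rule card_poly_roots_bound[OF \<open>p \<noteq> 0\<close>])
  moreover have "{x. poly p x = 0} = UNIV" using H ev by auto
  moreover have "(2::nat) ^ (N - 1) < 2 ^ N" by (rule power_strict_increasing) (use N_pos in auto)
  ultimately show False using cardF by (metis leD order.trans)
qed

lemma half_count:
  assumes cl: "\<forall>x\<in>G. \<forall>y\<in>G. x + y \<in> G"
    and ad: "\<forall>x\<in>G. \<forall>y\<in>G. \<phi> (x + y) = \<phi> x + (\<phi> y::'a)"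
    and v01: "\<forall>x\<in>G. \<phi> x = 0 \<or> \<phi> x = 1"
    and gz: "(gz::'a) \<in> G" "\<phi> gz \<noteq> 0"
  shows "2 * card {x\<in>G. \<phi> x = 0} = card G"
proof -
  have p1: "\<phi> gz = 1" using v01 gz by auto
  let ?Z = "{x\<in>G. \<phi> x = 0}" and ?O = "{x\<in>G. \<phi> x = 1}"
  have "bij_betw (\<lambda>x. x + gz) ?Z ?O"
    unfolding bij_betw_def
  proof
    show "inj_on (\<lambda>x. x + gz) ?Z" by (auto simp: inj_on_def)
    show "(\<lambda>x. x + gz) ` ?Z = ?O"
    proof
      show "(\<lambda>x. x + gz) ` ?Z \<subseteq> ?O" using cl ad gz p1 by auto
      show "?O \<subseteq> (\<lambda>x. x + gz) ` ?Z"
      proof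
        fix y assume y: "y \<in> ?O"
        then have "y + gz \<in> ?Z" using cl ad gz p1 by (auto simp: two[symmetric] one_add_one)
        moreover have "y = (y + gz) + gz" by (simp add: add.assoc)
        ultimately show "y \<in> (\<lambda>x. x + gz) ` ?Z" by blast
      qed
    qed
  qed
  then have "card ?Z = card ?O" by (rule bij_betw_same_card)
  moreover have "G = ?Z \<union> ?O" using v01 by auto
  moreover have "?Z \<inter> ?O = {}" by auto
  ultimately have "card G = card ?Z + card ?Z"
    by (metis (no_types, lifting) card_Un_disjoint finite)
  then show ?thesis by simp
qed

end

context ff
begin
lemma card_filter_sum: "finite A \<Longrightarrow> card {x\<in>A. P x} = (\<Sum>x\<in>A. if P x then 1 else 0::nat)"
  by (simp add: sum.If_cases Int_def conj_commute)

lemma card_filter_UNIV: "card {x::'b::finite. P x} = (\<Sum>x\<in>UNIV. if P x then 1 else 0::nat)"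
  using card_filter_sum[of UNIV P] by simp

lemma T_mul_nonzero:
  assumes "(s::'a) \<noteq> 0" shows "\<exists>x. absT N (x * s) \<noteq> 0"
proof -
  obtain y :: 'a where "absT N y \<noteq> 0" using T_nonzero by blast
  moreover have "y / s * s = y" using assms by simp
  ultimately show ?thesis by metis
qed

lemma perp_count:
  assumes S: "sgrp (S::'a set)"
  shows "card S * card (perp N S) = 2 ^ N"
proof -
  let ?P = "perp N S"
  define c where "c s = card {x::'a. absT N (x * s) = 0}" for s
  define d where "d x = card {s\<in>S. absT N (x * s) = 0}" for x
  have S0: "0 \<in> S" and Scl: "\<forall>x\<in>S. \<forall>y\<in>S. x + y \<in> S" using S unfolding sgrp_def by auto
  have "(\<Sum>s\<in>S. c s) = (\<Sum>s\<in>S. \<Sum>x\<in>UNIV. if absT N (x * s) = 0 then 1 else 0)"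
    unfolding c_def by (intro sum.cong refl) (rule card_filter_UNIV)
  also have "\<dots> = (\<Sum>x\<in>UNIV. \<Sum>s\<in>S. if absT N (x * s) = 0 then 1 else 0)" by (rule sum.swap)
  also have "\<dots> = (\<Sum>x\<in>UNIV. d x)"
    unfolding d_def by (intro sum.cong refl) (use card_filter_sum[of S] in simp)
  finally have eq: "(\<Sum>s\<in>S. c s) = (\<Sum>x\<in>UNIV. d x)" .
  have c2: "2 * c s = (if s = 0 then 2 * 2 ^ N else 2 ^ N)" for s
  proof (cases "s = 0")
    case True then show ?thesis unfolding c_def using cardF by simp
  next
    case False
    obtain g where g: "absT N (g * s) \<noteq> 0" using T_mul_nonzero[OF False] by blast
    have "2 * card {x \<in> UNIV. absT N (x * s) = 0} = card (UNIV::'a set)"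
      by (rule half_count[where gz = g]) (auto simp: distrib_right T_add T_01 g)
    then show ?thesis unfolding c_def using False cardF by simp
  qed
  have d2: "2 * d x = (if x \<in> ?P then 2 * card S else card S)" for x
  proof (cases "x \<in> ?P")
    case True
    then have "{s\<in>S. absT N (x * s) = 0} = S" unfolding perp_def by auto
    then show ?thesis unfolding d_def using True by simp
  next
    case False
    then obtain g where g: "g \<in> S" "absT N (x * g) \<noteq> 0" unfolding perp_def by auto
    have "2 * card {s \<in> S. absT N (x * s) = 0} = card S"
      by (rule half_count[where gz = g]) (use Scl g in \<open>auto simp: distrib_left T_add T_01\<close>)
    then show ?thesis unfolding d_def using False by simp
  qed
  have "2 * (\<Sum>s\<in>S. c s) = (\<Sum>s\<in>S. 2 * c s)" by (simp add: sum_distrib_left)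
  also have "\<dots> = (\<Sum>s\<in>S. if s = 0 then 2 * 2 ^ N else 2 ^ N)" using c2 by simp
  also have "\<dots> = 2 * 2 ^ N + (card S - 1) * 2 ^ N"
    using S0 by (simp add: sum.remove[of S 0] card_Diff_singleton)
  finally have lhs: "2 * (\<Sum>s\<in>S. c s) = 2 * 2 ^ N + (card S - 1) * 2 ^ N" .
  have "2 * (\<Sum>x\<in>UNIV. d x) = (\<Sum>x\<in>UNIV. 2 * d x)" by (simp add: sum_distrib_left)
  also have "\<dots> = (\<Sum>x\<in>UNIV. if x \<in> ?P then 2 * card S else card S)" using d2 by simp
  also have "\<dots> = (\<Sum>x\<in>UNIV - ?P. if x \<in> ?P then 2 * card S else card S) + (\<Sum>x\<in>?P. if x \<in> ?P then 2 * card S else card S)"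
    by (rule sum.subset_diff) auto
  also have "\<dots> = (card (UNIV::'a set) - card ?P) * card S + card ?P * (2 * card S)"
    by (simp add: card_Diff_subset)
  finally have rhs: "2 * (\<Sum>x\<in>UNIV. d x) = (2 ^ N - card ?P) * card S + card ?P * (2 * card S)"
    using cardF by simp
  have Sp: "card S \<ge> 1" using S0 by (metis One_nat_def Suc_leI card_gt_0_iff empty_iff finite)
  have Pl: "card ?P \<le> 2 ^ N" using cardF by (metis card_mono finite subset_UNIV)
  from lhs rhs eq have E: "2 * 2 ^ N + (card S - 1) * 2 ^ N = (2 ^ N - card ?P) * card S + card ?P * (2 * card S)"
    by simp
  define s where "s = card S"
  define p where "p = card ?P"
  define F :: nat where "F = 2 ^ N"
  have E': "2 * F + (s - 1) * F = (F - p) * s + p * (2 * s)" using E unfolding s_def p_def F_def .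
  have "int (2 * F + (s - 1) * F) = int ((F - p) * s + p * (2 * s))" using E' by simp
  then have "2 * int F + (int s - 1) * int F = (int F - int p) * int s + int p * (2 * int s)"
    using Sp Pl unfolding s_def[symmetric] p_def[symmetric] F_def[symmetric] by (simp add: of_nat_diff)
  then have "int F = int s * int p" by (simp add: algebra_simps)
  then have "F = s * p" by (metis of_nat_eq_iff of_nat_mult)
  then show ?thesis unfolding s_def p_def F_def by simp
qed

lemma perp_sgrp: "sgrp (perp N (S::'a set))"
  unfolding sgrp_def perp_def by (auto simp: distrib_right T_add)

lemma perp_anti: "S \<subseteq> S' \<Longrightarrow> perp N S' \<subseteq> perp N (S::'a set)"
  unfolding perp_def by auto

lemma perp_perp:
  assumes S: "sgrp (S::'a set)"
  shows "perp N (perp N S) = S"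
proof -
  have sub: "S \<subseteq> perp N (perp N S)" unfolding perp_def by (auto simp: mult.commute)
  have "card (perp N S) * card (perp N (perp N S)) = 2 ^ N" by (rule perp_count[OF perp_sgrp])
  moreover have "card S * card (perp N S) = 2 ^ N" by (rule perp_count[OF S])
  moreover have "card (perp N S) > 0"
    using perp_sgrp[of S] unfolding sgrp_def by (metis card_gt_0_iff empty_iff finite)
  ultimately have "card (perp N (perp N S)) = card S" by (metis mult.commute nat_mult_eq_cancel1)
  then show ?thesis using card_subset_eq[OF _ sub] by simp
qed

end


lemma sum_block:
  fixes a k :: nat and f :: "nat \<Rightarrow> 'b::comm_monoid_add"
  shows "(\<Sum>l\<in>{a..<a+k}. f l) = (\<Sum>j<k. f (a + j))"
  by (induction k) auto

lemma sum_pairs: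
  fixes n k :: nat and f :: "nat \<Rightarrow> 'b::comm_monoid_add"
  shows "(\<Sum>l<n * k. f l) = (\<Sum>i<n. \<Sum>j<k. f (i * k + j))"
  using sum.nat_group[of "\<lambda>l. f l" k n] by (simp add: sum_block)

context ff
begin

lemma powQ: "(x::'a) ^ ((2 ^ k) ^ i) = x ^ (2 ^ (k * i))"
  by (simp add: power_mult)

lemma tr_add: "tr (2 ^ k) n' ((x::'a) + y) = tr (2 ^ k) n' x + tr (2 ^ k) n' y"
  unfolding tr_def powQ by (simp add: frob_add sum.distrib)

lemma tr_zero[simp]: "tr (2 ^ k) n' (0::'a) = 0"
  unfolding tr_def by (simp add: power_0_left)

lemma absT_zero'[simp]: "absT k (0::'a) = 0"
  unfolding absT_def by (simp add: power_0_left)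

lemma tr_of_pow:
  assumes "k * n' = N"
  shows "tr (2 ^ k) n' ((x::'a) ^ (2 ^ k)) = tr (2 ^ k) n' x"
proof -
  let ?f = "\<lambda>i. x ^ (2 ^ (k * i))"
  have "tr (2 ^ k) n' (x ^ (2 ^ k)) = (\<Sum>i<n'. ?f (Suc i))"
    unfolding tr_def powQ by (simp add: power_mult[symmetric] power_add mult.commute)
  moreover have "(\<Sum>i<Suc n'. ?f i) = ?f 0 + (\<Sum>i<n'. ?f (Suc i))" by (rule sum.lessThan_Suc_shift)
  moreover have "(\<Sum>i<Suc n'. ?f i) = (\<Sum>i<n'. ?f i) + ?f n'" by simp
  moreover have "?f n' = ?f 0" using frob_card assms by simp
  ultimately show ?thesis unfolding tr_def powQ by simp
qed

lemma tr_pow: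
  assumes "k * n' = N"
  shows "tr (2 ^ k) n' (x::'a) ^ (2 ^ k) = tr (2 ^ k) n' x"
proof -
  have "tr (2 ^ k) n' x ^ (2 ^ k) = tr (2 ^ k) n' (x ^ (2 ^ k))"
    unfolding tr_def frob_sum powQ by (simp add: power_mult[symmetric] mult.commute)
  then show ?thesis using tr_of_pow[OF assms] by simp
qed

lemma fix_pow:
  assumes "(w::'a) ^ (2 ^ k) = w"
  shows "w ^ (2 ^ (k * i)) = w"
proof (induction i)
  case 0 then show ?case by simp
next
  case (Suc i)
  have "w ^ (2 ^ (k * Suc i)) = (w ^ (2 ^ (k * i))) ^ (2 ^ k)"
    by (simp add: power_mult[symmetric] power_add mult.commute)
  then show ?case using Suc assms by simp
qed

lemma tr_lin:
  assumes "(w::'a) ^ (2 ^ k) = w"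
  shows "tr (2 ^ k) n' (w * y) = w * tr (2 ^ k) n' y"
  unfolding tr_def powQ by (simp add: power_mult_distrib fix_pow[OF assms] sum_distrib_left)

lemma T_tr:
  assumes "k * n' = N"
  shows "absT N (y::'a) = absT k (tr (2 ^ k) n' y)"
proof -
  have "absT k (tr (2 ^ k) n' y) = (\<Sum>j<k. \<Sum>i<n'. y ^ (2 ^ (i * k + j)))"
    unfolding absT_def tr_def powQ frob_sum
    by (simp add: power_mult[symmetric] power_add mult.commute)
  also have "\<dots> = (\<Sum>i<n'. \<Sum>j<k. y ^ (2 ^ (i * k + j)))" by (rule sum.swap)
  also have "\<dots> = (\<Sum>l<n' * k. y ^ (2 ^ l))" by (rule sum_pairs[symmetric])
  finally show ?thesis unfolding absT_def using assms by (simp add: mult.commute)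
qed

lemma W_sgrp: "sgrp {w::'a. w ^ (2 ^ k) = w}"
  unfolding sgrp_def by (auto simp: frob_add power_0_left)

lemma ker_tr:
  assumes "k * n' = N"
  shows "{x::'a. tr (2 ^ k) n' x = 0} = perp N {w. w ^ (2 ^ k) = w}"
proof
  show "{x::'a. tr (2 ^ k) n' x = 0} \<subseteq> perp N {w. w ^ (2 ^ k) = w}"
  proof
    fix x :: 'a assume "x \<in> {x::'a. tr (2 ^ k) n' x = 0}"
    then have x: "tr (2 ^ k) n' x = 0" by simp
    have "absT N (x * s) = 0" if s: "s ^ (2 ^ k) = s" for s
    proof -
      have "absT N (x * s) = absT k (tr (2 ^ k) n' (s * x))" using T_tr[OF assms] by (simp add: mult.commute)
      also have "\<dots> = 0" using tr_lin[OF s] x by simp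
      finally show ?thesis .
    qed
    then show "x \<in> perp N {w. w ^ (2 ^ k) = w}" unfolding perp_def by auto
  qed
next
  show "perp N {w. w ^ (2 ^ k) = w} \<subseteq> {x::'a. tr (2 ^ k) n' x = 0}"
  proof
    fix x :: 'a assume x: "x \<in> perp N {w. w ^ (2 ^ k) = w}"
    show "x \<in> {x. tr (2 ^ k) n' x = 0}"
    proof (rule ccontr)
      assume "x \<notin> {x. tr (2 ^ k) n' x = 0}"
      then have t0: "tr (2 ^ k) n' x \<noteq> 0" by simp
      obtain y :: 'a where y: "absT N y \<noteq> 0" using T_nonzero by blast
      define z where "z = tr (2 ^ k) n' y"
      define w where "w = z / tr (2 ^ k) n' x"
      have w: "w ^ (2 ^ k) = w" unfolding w_def z_def by (simp add: power_divide tr_pow[OF assms])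
      have "absT N (x * w) = absT k (tr (2 ^ k) n' (w * x))" using T_tr[OF assms] by (simp add: mult.commute)
      also have "\<dots> = absT k z" using tr_lin[OF w] t0 unfolding w_def by simp
      also have "\<dots> \<noteq> 0" using y T_tr[OF assms] unfolding z_def by simp
      finally show False using x w unfolding perp_def by auto
    qed
  qed
qed

lemma tr_surj:
  assumes "k * n' = N" and "(b::'a) \<noteq> 0" and "c ^ (2 ^ k) = c"
  shows "\<exists>x. tr (2 ^ k) n' (x * b) = c"
proof -
  obtain y :: 'a where y: "absT N y \<noteq> 0" using T_nonzero by blast
  define t where "t = tr (2 ^ k) n' y"
  have t0: "t \<noteq> 0" using y T_tr[OF assms(1)] unfolding t_def by auto
  have ct: "(c / t) ^ (2 ^ k) = c / t" unfolding t_def by (simp add: power_divide tr_pow[OF assms(1)] assms(3))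
  have "tr (2 ^ k) n' ((c / t) * y / b * b) = tr (2 ^ k) n' ((c / t) * y)" using assms(2) by simp
  also have "\<dots> = c" using tr_lin[OF ct] t0 unfolding t_def by simp
  finally show ?thesis by blast
qed

end


context ff
begin

lemma add_eq0: "(x::'a) + y = 0 \<longleftrightarrow> x = y"
  by (metis add_self add_eq_0_iff minus_eq)

lemma lin2_add: "lin2 K cf ((x::'a) + y) = lin2 K cf x + lin2 K cf y"
  unfolding lin2_def by (simp add: frob_add distrib_left sum.distrib)

lemma lin2_zero[simp]: "lin2 K cf (0::'a) = 0"
  unfolding lin2_def by (simp add: power_0_left)

lemma T_sum: "absT N (sum (f::_\<Rightarrow>'a) S) = sum (\<lambda>i. absT N (f i)) S"
proof (induction S rule: infinite_finite_induct)
  case (infinite A) then show ?case by simp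
next
  case empty then show ?case by simp
next
  case (insert x F) then show ?case by (simp add: T_add)
qed

lemma adjoint: "absT N (adj2 K cf x * v) = absT N ((x::'a) * lin2 K cf v)"
proof -
  have "absT N (adj2 K cf x * v) = (\<Sum>j<K. absT N (frob_inv j (cf j * x) * v))"
    unfolding adj2_def by (simp add: sum_distrib_right T_sum)
  also have "\<dots> = (\<Sum>j<K. absT N (cf j * x * v ^ (2 ^ j)))"
  proof (rule sum.cong[OF refl])
    fix j
    have "absT N (frob_inv j (cf j * x) * v) = absT N ((frob_inv j (cf j * x) * v) ^ (2 ^ j))"
      by (rule T_frob[symmetric])
    also have "\<dots> = absT N (cf j * x * v ^ (2 ^ j))" by (simp add: power_mult_distrib frob_inv_pow)
    finally show "absT N (frob_inv j (cf j * x) * v) = absT N (cf j * x * v ^ (2 ^ j))" .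
  qed
  also have "\<dots> = absT N (x * lin2 K cf v)"
    unfolding lin2_def by (simp add: sum_distrib_left T_sum mult_ac)
  finally show ?thesis .
qed

lemma lin2_inj_iff: "inj (lin2 K cf :: 'a \<Rightarrow> 'a) \<longleftrightarrow> addker (lin2 K cf :: 'a \<Rightarrow> 'a) = {0}"
proof
  assume "inj (lin2 K cf :: 'a \<Rightarrow> 'a)"
  then show "addker (lin2 K cf :: 'a \<Rightarrow> 'a) = {0}" unfolding addker_def
    by (auto dest: injD[where y = 0])
next
  assume H: "addker (lin2 K cf :: 'a \<Rightarrow> 'a) = {0}"
  show "inj (lin2 K cf :: 'a \<Rightarrow> 'a)"
  proof (rule injI)
    fix x y :: 'a assume "lin2 K cf x = lin2 K cf y"
    then have "lin2 K cf (x + y) = 0" by (simp add: lin2_add)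
    then have "x + y \<in> addker (lin2 K cf)" unfolding addker_def by simp
    then show "x = y" using H add_eq0 by auto
  qed
qed

context
  fixes m n :: nat
  assumes mn: "m * n = N" and m1: "m \<ge> 1" and ev: "even n"
begin

lemma n_pos: "n \<ge> 1"
  using N_pos mn by (cases n) auto

lemma mn2: "(2 * m) * (n div 2) = N"
  using ev mn by (metis dvd_mult_div_cancel mult.assoc mult.commute)

lemma qn: "(x::'a) ^ ((2 ^ m) ^ n) = x"
  using frob_card mn by (simp add: power_mult[symmetric])

lemma diff_formula:
  "tr (2 ^ m) n (A * (x + h) ^ (2 ^ m + 1)) + lin2 K cf (x + h)
   = (tr (2 ^ m) n (A * x ^ (2 ^ m + 1)) + lin2 K cf x)
     + (tr (2 ^ m) n (x * ((A * h) ^ ((2 ^ m) ^ (n - 1)) + A * h ^ (2 ^ m)))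
        + tr (2 ^ m) n (A * h ^ (2 ^ m + 1)) + lin2 K cf (h::'a))"
proof -
  let ?q = "(2::nat) ^ m"
  let ?T = "tr (2 ^ m) n :: 'a \<Rightarrow> 'a"
  have e1: "A * (x + h) ^ (?q + 1) = A * x ^ (?q + 1) + A * (x ^ ?q * h) + x * (A * h ^ ?q) + A * h ^ (?q + 1)"
  proof -
    have "(x + h) ^ (?q + 1) = (x ^ ?q + h ^ ?q) * (x + h)" by (simp add: frob_add)
    then show ?thesis by (simp add: algebra_simps)
  qed
  have e2: "?T (A * (x ^ ?q * h)) = ?T (x * (A * h) ^ (?q ^ (n - 1)))"
  proof -
    have "?q ^ (n - 1) * ?q = ?q ^ n" using n_pos by (metis Suc_diff_le diff_Suc_1 power_Suc2)
    then have "((A * h) ^ (?q ^ (n - 1))) ^ ?q = A * h"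
      by (metis power_mult qn)
    then have "(x * (A * h) ^ (?q ^ (n - 1))) ^ ?q = x ^ ?q * (A * h)"
      by (metis power_mult_distrib)
    then have "?T (A * (x ^ ?q * h)) = ?T ((x * (A * h) ^ (?q ^ (n - 1))) ^ (2 ^ m))" by (simp add: mult_ac)
    also have "\<dots> = ?T (x * (A * h) ^ (?q ^ (n - 1)))" by (rule tr_of_pow[OF mn])
    finally show ?thesis .
  qed
  show ?thesis
    unfolding e1 lin2_add by (simp add: tr_add e2 distrib_left add_ac)
qed


lemma inj_iff_D:
  "inj (\<lambda>x::'a. tr (2 ^ m) n (A * x ^ (2 ^ m + 1)) + lin2 K cf x)
   \<longleftrightarrow> (\<forall>h x. h \<noteq> 0 \<longrightarrow> tr (2 ^ m) n (x * ((A * h) ^ ((2 ^ m) ^ (n - 1)) + A * h ^ (2 ^ m)))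
        + tr (2 ^ m) n (A * h ^ (2 ^ m + 1)) + lin2 K cf (h::'a) \<noteq> 0)"
  (is "inj ?f \<longleftrightarrow> (\<forall>h x. h \<noteq> 0 \<longrightarrow> ?D h x \<noteq> 0)")
proof
  assume inj: "inj ?f"
  show "\<forall>h x. h \<noteq> 0 \<longrightarrow> ?D h x \<noteq> 0"
  proof (intro allI impI)
    fix h x :: 'a assume h: "h \<noteq> 0"
    show "?D h x \<noteq> 0"
    proof
      assume "?D h x = 0"
      then have "?f (x + h) = ?f x" using diff_formula[of A x h K cf] by simp
      then have "x + h = x" by (rule injD[OF inj])
      then show False using h by simp
    qed
  qed
next
  assume H: "\<forall>h x. h \<noteq> 0 \<longrightarrow> ?D h x \<noteq> 0"
  show "inj ?f"
  proof (rule injI)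
    fix u v :: 'a assume uv: "?f u = ?f v"
    show "u = v"
    proof (rule ccontr)
      assume "u \<noteq> v"
      then have h: "u + v \<noteq> 0" using add_eq0 by simp
      have e: "u + (u + v) = v" by (simp add: add.assoc[symmetric])
      have "?f (u + (u + v)) = ?f u + ?D (u + v) u" using diff_formula[of A u "u + v" K cf] by (simp only:)
      then have "?f v = ?f u + ?D (u + v) u" unfolding e .
      then have "?f u + ?D (u + v) u = ?f u" using uv by simp
      then have "?D (u + v) u = 0" by (simp only: add_cancel_left_right)
      then show False using H h by blast
    qed
  qed
qed

lemma b_pow:
  "((A * h) ^ ((2 ^ m) ^ (n - 1)) + A * (h::'a) ^ (2 ^ m)) ^ (2 ^ m)
    = A * h + A ^ (2 ^ m) * h ^ (2 ^ (2 * m))"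
proof -
  let ?q = "(2::nat) ^ m"
  have "?q ^ (n - 1) * ?q = ?q ^ n" using n_pos by (metis Suc_diff_le diff_Suc_1 power_Suc2)
  then have a: "((A * h) ^ (?q ^ (n - 1))) ^ ?q = A * h" by (metis power_mult qn)
  have b: "(A * h ^ ?q) ^ ?q = A ^ ?q * h ^ (2 ^ (2 * m))"
    by (simp add: power_mult_distrib power_mult[symmetric] power_add mult_2)
  show ?thesis using a b by (simp add: frob_add)
qed

lemma b1_zero_iff:
  "(h ^ ((2 ^ m) ^ (n - 1)) + (h::'a) ^ (2 ^ m) = 0) \<longleftrightarrow> h ^ (2 ^ (2 * m)) = h"
proof -
  have "(h ^ ((2 ^ m) ^ (n - 1)) + h ^ (2 ^ m) = 0) \<longleftrightarrow> (h ^ ((2 ^ m) ^ (n - 1)) + h ^ (2 ^ m)) ^ (2 ^ m) = 0"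
    by simp
  also have "\<dots> \<longleftrightarrow> h + h ^ (2 ^ (2 * m)) = 0" using b_pow[of 1 h] by simp
  also have "\<dots> \<longleftrightarrow> h ^ (2 ^ (2 * m)) = h" using add_eq0 by metis
  finally show ?thesis .
qed

lemma TrV0:
  assumes "(h::'a) ^ (2 ^ (2 * m)) = h"
  shows "tr (2 ^ m) n (h ^ (2 ^ m + 1)) = 0"
proof -
  let ?y = "h ^ (2 ^ m + 1)"
  have qq: "(2::nat) ^ (2 * m) = 2 ^ m * 2 ^ m" by (simp add: mult_2 power_add)
  have "?y ^ (2 ^ m) = h ^ (2 ^ (2 * m)) * h ^ (2 ^ m)"
    unfolding qq by (simp add: power_mult[symmetric] power_add algebra_simps)
  then have y: "?y ^ (2 ^ m) = ?y" using assms by (simp add: power_add mult.commute)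
  have "tr (2 ^ m) n ?y = (\<Sum>i<n. ?y)" unfolding tr_def powQ using fix_pow[OF y] by simp
  also have "\<dots> = of_nat n * ?y" by simp
  also have "of_nat n = (0::'a)"
  proof -
    obtain r where "n = 2 * r" using ev by blast
    then show ?thesis using two by simp
  qed
  finally show ?thesis by simp
qed

lemma W_add: "(c::'a) ^ (2 ^ m) = c \<Longrightarrow> d ^ (2 ^ m) = d \<Longrightarrow> (c + d) ^ (2 ^ m) = c + d"
  by (simp add: frob_add)


lemma card_qn: "card (UNIV::'a set) = (2 ^ m) ^ n"
  using cardF mn by (metis power_mult)

lemma power_lemma:
  assumes A: "(A::'a) \<noteq> 0" and h: "(h::'a) \<noteq> 0"
    and eq: "A * h = A ^ (2 ^ m) * h ^ (2 ^ (2 * m))"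
  shows "A ^ (((2 ^ m) ^ n - 1) div (2 ^ m + 1)) = 1"
proof -
  define q :: nat where "q = 2 ^ m"
  define e where "e = (q ^ n - 1) div (q + 1)"
  have "(2::nat) ^ 1 \<le> 2 ^ m" by (rule power_increasing) (use m1 in auto)
  then have q2: "q \<ge> 2" unfolding q_def by simp
  have "q * q mod (q + 1) = 1"
  proof -
    obtain p where p: "q = Suc p" using q2 by (cases q) auto
    have qq: "q * q = 1 + p * (q + 1)" using p by (simp add: algebra_simps)
    have "q * q mod (q + 1) = 1 mod (q + 1)" unfolding qq by (rule mod_mult_self1)
    then show ?thesis using q2 by simp
  qed
  then have "(q * q) ^ (n div 2) mod (q + 1) = 1 ^ (n div 2) mod (q + 1)"
    by (metis power_mod)
  then have "(q * q) ^ (n div 2) mod (q + 1) = 1" using q2 by simp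
  moreover have "(q * q) ^ (n div 2) = q ^ n"
  proof -
    have "n = 2 * (n div 2)" using ev by simp
    then have "q ^ n = (q ^ 2) ^ (n div 2)" by (metis power_mult)
    then show ?thesis by (simp add: power2_eq_square)
  qed
  ultimately have qm: "q ^ n mod (q + 1) = 1" by simp
  have qe: "e * (q + 1) = q ^ n - 1"
  proof -
    have "q ^ n = q ^ n div (q + 1) * (q + 1) + 1" using div_mult_mod_eq[of "q ^ n" "q + 1"] qm by simp
    then have "q ^ n - 1 = q ^ n div (q + 1) * (q + 1)" by simp
    then show ?thesis unfolding e_def by (metis add_gr_0 nonzero_mult_div_cancel_right zero_less_one not_gr0)
  qed
  have cq: "card (UNIV::'a set) = q ^ n" unfolding q_def by (rule card_qn)
  define u where "u = h ^ (q - 1)"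
  have u0: "u \<noteq> 0" unfolding u_def using h by simp
  have "h ^ (2 ^ (2 * m)) = h ^ (q * q)" unfolding q_def by (simp add: power_mult[symmetric] mult_2 power_add)
  also have "q * q = 1 + (q - 1) * (q + 1)" using q2 by (simp add: algebra_simps)
  also have "h ^ (1 + (q - 1) * (q + 1)) = h * u ^ (q + 1)" unfolding u_def by (simp add: power_add power_mult)
  finally have hq: "h ^ (2 ^ (2 * m)) = h * u ^ (q + 1)" .
  have "(2::nat) ^ m = Suc (q - 1)" unfolding q_def using q2 q_def by simp
  then have Aq: "A ^ (2 ^ m) = A * A ^ (q - 1)" by (simp only: power_Suc)
  have "A * h * 1 = A * h * (A ^ (q - 1) * u ^ (q + 1))" using eq unfolding Aq hq by (simp add: mult_ac)
  moreover have "A * h \<noteq> 0" using A h by simp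
  ultimately have one: "A ^ (q - 1) * u ^ (q + 1) = 1" using mult_left_cancel[of "A * h" 1] by simp
  have "(A ^ (q - 1) * u ^ (q + 1)) ^ e = 1" using one by simp
  moreover have "(u ^ (q + 1)) ^ e = 1"
  proof -
    have "(u ^ (q + 1)) ^ e = u ^ ((q + 1) * e)" by (rule power_mult[symmetric])
    also have "(q + 1) * e = card (UNIV::'a set) - 1" using qe cq by (simp only: mult.commute)
    finally have "(u ^ (q + 1)) ^ e = u ^ (card (UNIV::'a set) - 1)" .
    then show ?thesis using fermat_aux[OF u0] by simp
  qed
  ultimately have a1: "A ^ ((q - 1) * e) = 1" by (simp add: power_mult_distrib power_mult)
  have a2: "A ^ ((q + 1) * e) = 1"
    using fermat_aux[OF A] qe cq by (simp add: mult.commute)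
  have "(q + 1) * e = (q - 1) * e + 2 * e" using q2 by (simp add: algebra_simps)
  then have "A ^ ((q - 1) * e + 2 * e) = 1" using a2 by metis
  then have "A ^ ((q - 1) * e) * A ^ (2 * e) = 1" by (simp only: power_add)
  then have a3: "A ^ (2 * e) = 1" using a1 by simp
  obtain r where r: "q - 1 = 2 * r + 1"
  proof -
    have "even q" unfolding q_def using m1 by simp
    then obtain t where "q = 2 * t" by blast
    then show ?thesis using that[of "t - 1"] q2 by simp
  qed
  have "A ^ ((q - 1) * e) = (A ^ (2 * e)) ^ r * A ^ e" unfolding r
    by (simp add: power_add power_mult[symmetric] algebra_simps)
  then have "A ^ e = 1" using a1 a3 by simp
  then show ?thesis unfolding e_def q_def .
qed


lemma inj_iff_D1:
  "inj (\<lambda>x::'a. tr (2 ^ m) n (x ^ (2 ^ m + 1)) + lin2 K cf x)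
   \<longleftrightarrow> (\<forall>h x. h \<noteq> 0 \<longrightarrow> tr (2 ^ m) n (x * (h ^ ((2 ^ m) ^ (n - 1)) + h ^ (2 ^ m)))
        + tr (2 ^ m) n (h ^ (2 ^ m + 1)) + lin2 K cf (h::'a) \<noteq> 0)"
  using inj_iff_D[of 1 K cf] by simp

lemma W0: "(0::'a) ^ (2 ^ m) = 0" by (simp add: power_0_left)

lemma TrW: "tr (2 ^ m) n (y::'a) ^ (2 ^ m) = tr (2 ^ m) n y"
  by (rule tr_pow[OF mn])

lemma inj_char:
  "inj (\<lambda>x::'a. tr (2 ^ m) n (x ^ (2 ^ m + 1)) + lin2 K cf x)
   \<longleftrightarrow> inj (lin2 K cf :: 'a \<Rightarrow> 'a)
       \<and> (\<forall>h::'a. lin2 K cf h ^ (2 ^ m) = lin2 K cf h \<longrightarrow> h ^ (2 ^ (2 * m)) = h)"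
  (is "?I \<longleftrightarrow> inj ?L \<and> ?R")
proof -
  let ?T = "tr (2 ^ m) n :: 'a \<Rightarrow> 'a"
  let ?b = "\<lambda>h::'a. h ^ ((2 ^ m) ^ (n - 1)) + h ^ (2 ^ m)"
  let ?D = "\<lambda>h x. ?T (x * ?b h) + ?T (h ^ (2 ^ m + 1)) + ?L h"
  have K: "\<exists>x. ?D h x = 0" if h: "h ^ (2 ^ (2 * m)) \<noteq> h" and Lh: "?L h ^ (2 ^ m) = ?L h" for h
  proof -
    have b0: "?b h \<noteq> 0" using b1_zero_iff h by simp
    have c: "(?T (h ^ (2 ^ m + 1)) + ?L h) ^ (2 ^ m) = ?T (h ^ (2 ^ m + 1)) + ?L h"
      by (rule W_add[OF TrW Lh])
    obtain x where eqx: "?T (x * ?b h) = ?T (h ^ (2 ^ m + 1)) + ?L h"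
      using tr_surj[OF mn b0 c] by blast
    have "?D h x = 0" by (simp only: add.assoc eqx[symmetric] add_self)
    then show ?thesis by blast
  qed
  show ?thesis
  proof
    assume "?I"
    then have H: "\<forall>h x. h \<noteq> 0 \<longrightarrow> ?D h x \<noteq> 0" using inj_iff_D1 by blast
    have R: "?R"
    proof (intro allI impI)
      fix h :: 'a assume Lh: "?L h ^ (2 ^ m) = ?L h"
      show "h ^ (2 ^ (2 * m)) = h"
      proof (rule ccontr)
        assume h: "h ^ (2 ^ (2 * m)) \<noteq> h"
        then have "h \<noteq> 0" by (auto simp: power_0_left)
        then show False using K[OF h Lh] H by blast
      qed
    qed
    have "inj ?L"
    proof (rule injI)
      fix u v :: 'a assume uv: "?L u = ?L v"
      let ?h = "u + v"
      have Lh: "?L ?h = 0" using uv by (simp add: lin2_add)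
      show "u = v"
      proof (rule ccontr)
        assume "u \<noteq> v"
        then have h0: "?h \<noteq> 0" using add_eq0 by simp
        show False
        proof (cases "?h ^ (2 ^ (2 * m)) = ?h")
          case True
          have "?D ?h 0 = 0" using TrV0[OF True] Lh by simp
          then show False using H h0 by blast
        next
          case False
          then show False using K[OF False] Lh H h0 W0 by auto
        qed
      qed
    qed
    then show "inj ?L \<and> ?R" using R by blast
  next
    assume A: "inj ?L \<and> ?R"
    have "\<forall>h x. h \<noteq> 0 \<longrightarrow> ?D h x \<noteq> 0"
    proof (intro allI impI notI)
      fix h x :: 'a assume h0: "h \<noteq> 0" and D: "?D h x = 0"
      have Lh: "?L h = ?T (x * ?b h) + ?T (h ^ (2 ^ m + 1))" using D add_eq0 by (metis add.commute)
      have "?L h ^ (2 ^ m) = ?L h" unfolding Lh by (rule W_add[OF TrW TrW])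
      then have hV: "h ^ (2 ^ (2 * m)) = h" using A by blast
      then have "?b h = 0" using b1_zero_iff by blast
      then have "?L h = 0" using Lh TrV0[OF hV] by simp
      then have "?L h = ?L 0" by simp
      then have "h = 0" using A by (meson injD)
      then show False using h0 by simp
    qed
    then show "?I" using inj_iff_D1 by blast
  qed
qed


lemma tr2_eq: "tr2 (2 ^ m) n = (tr (2 ^ (2 * m)) (n div 2) :: 'a \<Rightarrow> 'a)"
proof
  fix x :: 'a
  have "((2::nat) ^ m) ^ 2 = 2 ^ (2 * m)" by (simp add: power_mult[symmetric] mult.commute)
  then show "tr2 (2 ^ m) n x = tr (2 ^ (2 * m)) (n div 2) x" unfolding tr2_def tr_def by simp
qed

lemma part1:
  "bij (\<lambda>x::'a. tr (2 ^ m) n (x ^ (2 ^ m + 1)) + lin2 N cf x)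
   \<longleftrightarrow> (addker (tr2 (2 ^ m) n \<circ> adj2 N cf) \<subseteq> addker (tr (2 ^ m) n :: 'a \<Rightarrow> 'a)
        \<and> addker (lin2 N cf :: 'a \<Rightarrow> 'a) = {0})"
proof -
  let ?f = "\<lambda>x::'a. tr (2 ^ m) n (x ^ (2 ^ m + 1)) + lin2 N cf x"
  let ?L = "lin2 N cf :: 'a \<Rightarrow> 'a"
  let ?W = "{w::'a. w ^ (2 ^ m) = w}"
  let ?V = "{w::'a. w ^ (2 ^ (2 * m)) = w}"
  have bi: "bij ?f \<longleftrightarrow> inj ?f"
    using finite_UNIV_inj_surj[OF finite, of ?f] by (auto simp: bij_def)
  have k1: "addker (tr2 (2 ^ m) n \<circ> adj2 N cf) = perp N (?L ` ?V)"
  proof -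
    have "addker (tr2 (2 ^ m) n \<circ> adj2 N cf) = {x::'a. adj2 N cf x \<in> {y. tr (2 ^ (2 * m)) (n div 2) y = 0}}"
      unfolding addker_def tr2_eq by simp
    also have "\<dots> = {x::'a. adj2 N cf x \<in> perp N ?V}" unfolding ker_tr[OF mn2] ..
    also have "\<dots> = perp N (?L ` ?V)" unfolding perp_def by (auto simp: adjoint)
    finally show ?thesis .
  qed
  have k2: "addker (tr (2 ^ m) n :: 'a \<Rightarrow> 'a) = perp N ?W"
    unfolding addker_def ker_tr[OF mn, symmetric] ..
  have sgV: "sgrp (?L ` ?V)"
  proof -
    have V: "sgrp ?V" by (rule W_sgrp)
    have "0 \<in> ?L ` ?V"
    proof
      show "0 = ?L 0" by simp
      show "0 \<in> ?V" using V unfolding sgrp_def by blast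
    qed
    moreover have "x + y \<in> ?L ` ?V" if xy: "x \<in> ?L ` ?V" "y \<in> ?L ` ?V" for x y
    proof -
      obtain u v where uv: "u \<in> ?V" "v \<in> ?V" "x = ?L u" "y = ?L v" using xy by blast
      then have "x + y = ?L (u + v)" by (simp add: lin2_add)
      moreover have "u + v \<in> ?V" using V uv unfolding sgrp_def by blast
      ultimately show ?thesis by blast
    qed
    ultimately show ?thesis unfolding sgrp_def by blast
  qed
  have C: "perp N (?L ` ?V) \<subseteq> perp N ?W \<longleftrightarrow> ?W \<subseteq> ?L ` ?V"
  proof
    assume "perp N (?L ` ?V) \<subseteq> perp N ?W"
    then have "perp N (perp N ?W) \<subseteq> perp N (perp N (?L ` ?V))" by (rule perp_anti)
    then show "?W \<subseteq> ?L ` ?V" using perp_perp[OF W_sgrp] perp_perp[OF sgV] by simp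
  next
    assume "?W \<subseteq> ?L ` ?V"
    then show "perp N (?L ` ?V) \<subseteq> perp N ?W" by (rule perp_anti)
  qed
  have E: "?W \<subseteq> ?L ` ?V \<longleftrightarrow> (\<forall>h. ?L h ^ (2 ^ m) = ?L h \<longrightarrow> h ^ (2 ^ (2 * m)) = h)"
    if inj: "inj ?L"
  proof
    assume H: "?W \<subseteq> ?L ` ?V"
    show "\<forall>h. ?L h ^ (2 ^ m) = ?L h \<longrightarrow> h ^ (2 ^ (2 * m)) = h"
    proof (intro allI impI)
      fix h assume "?L h ^ (2 ^ m) = ?L h"
      then obtain v where v: "v \<in> ?V" "?L h = ?L v" using H by blast
      then have "h = v" using inj by (meson injD)
      then show "h ^ (2 ^ (2 * m)) = h" using v by simp
    qed
  next
    assume H: "\<forall>h. ?L h ^ (2 ^ m) = ?L h \<longrightarrow> h ^ (2 ^ (2 * m)) = h"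
    have surj: "surj ?L" using finite_UNIV_inj_surj[OF finite inj] .
    show "?W \<subseteq> ?L ` ?V"
    proof
      fix w assume w: "w \<in> ?W"
      obtain h where h: "w = ?L h" using surj by (metis surjD)
      then have "h \<in> ?V" using H w by simp
      then show "w \<in> ?L ` ?V" using h by blast
    qed
  qed
  show ?thesis
    unfolding bi inj_char k1 k2 C lin2_inj_iff[symmetric] using E by (meson)
qed


lemma part2:
  assumes A: "(A::'a) \<noteq> 0" and Ae: "A ^ (((2 ^ m) ^ n - 1) div (2 ^ m + 1)) \<noteq> 1"
  shows "\<not> bij (\<lambda>x::'a. tr (2 ^ m) n (A * x ^ (2 ^ m + 1)) + lin2 K cf x)"
proof
  let ?T = "tr (2 ^ m) n :: 'a \<Rightarrow> 'a"
  let ?L = "lin2 K cf :: 'a \<Rightarrow> 'a"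
  assume "bij (\<lambda>x::'a. tr (2 ^ m) n (A * x ^ (2 ^ m + 1)) + lin2 K cf x)"
  then have I: "inj (\<lambda>x::'a. tr (2 ^ m) n (A * x ^ (2 ^ m + 1)) + lin2 K cf x)" by (rule bij_is_inj)
  obtain h where h0: "h \<noteq> 0" and Lh: "?L h ^ (2 ^ m) = ?L h"
  proof (cases "inj ?L")
    case True
    then have "surj ?L" using finite_UNIV_inj_surj[OF finite] by blast
    then obtain h where h: "?L h = 1" by (metis surjD)
    then have "h \<noteq> 0" by auto
    then show ?thesis using that h by simp
  next
    case False
    then obtain u v where uv: "u \<noteq> v" "?L u = ?L v" unfolding inj_def by blast
    then have "?L (u + v) = 0" by (simp add: lin2_add)
    moreover have "u + v \<noteq> 0" using uv add_eq0 by simp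
    ultimately show ?thesis using that W0 by simp
  qed
  let ?b = "(A * h) ^ ((2 ^ m) ^ (n - 1)) + A * h ^ (2 ^ m)"
  have b0: "?b \<noteq> 0"
  proof
    assume b: "?b = 0"
    have "A * h + A ^ (2 ^ m) * h ^ (2 ^ (2 * m)) = ?b ^ (2 ^ m)" using b_pow[of A h] by simp
    also have "\<dots> = 0" unfolding b by simp
    finally have "A * h + A ^ (2 ^ m) * h ^ (2 ^ (2 * m)) = 0" .
    then have "A * h = A ^ (2 ^ m) * h ^ (2 ^ (2 * m))" using add_eq0 by blast
    then show False using power_lemma[OF A h0] Ae by blast
  qed
  have c: "(?T (A * h ^ (2 ^ m + 1)) + ?L h) ^ (2 ^ m) = ?T (A * h ^ (2 ^ m + 1)) + ?L h"
    by (rule W_add[OF TrW Lh])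
  obtain x where eqx: "?T (x * ?b) = ?T (A * h ^ (2 ^ m + 1)) + ?L h"
    using tr_surj[OF mn b0 c] by blast
  have "?T (x * ?b) + ?T (A * h ^ (2 ^ m + 1)) + ?L h = 0"
    by (simp only: add.assoc eqx[symmetric] add_self)
  then show False using I inj_iff_D[of A K cf] h0 by blast
qed

end
end

theorem mainTheorem10:
  fixes m n :: nat and a :: "nat \<Rightarrow> 'a::{finite,field}" and A :: 'a
  assumes "m \<ge> 1" and "even n" and "card (UNIV :: 'a set) = (2 ^ m) ^ n"
  shows "(bij (\<lambda>x::'a. tr (2 ^ m) n (x ^ (2 ^ m + 1)) + lin2 (m * n) a x)
            \<longleftrightarrow> (addker (tr2 (2 ^ m) n \<circ> adj2 (m * n) a) \<subseteq> addker (tr (2 ^ m) n)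
                 \<and> addker (lin2 (m * n) a) = {0}))
       \<and> (A \<noteq> 0 \<longrightarrow> A ^ (((2 ^ m) ^ n - 1) div (2 ^ m + 1)) \<noteq> 1 \<longrightarrow>
            \<not> bij (\<lambda>x::'a. tr (2 ^ m) n (A * x ^ (2 ^ m + 1)) + lin2 (m * n) a x))"
proof -
  have FF: "ff TYPE('a) (m * n)"
    by (rule ff.intro) (use assms(3) in \<open>simp add: power_mult\<close>)
  show ?thesis
    using ff.part1[OF FF refl assms(1) assms(2), where cf = a] ff.part2[OF FF refl assms(1) assms(2), where A = A and K = "m * n" and cf = a]
    by blast
qed

end
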